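(* Let $N\ge 2$ and let $H_N$ act on $\mathbb{C}^N$ as in the context. For every $g\in H_N$ and every $x\in\mathbb{C}^N$, $B^H(g\cdot x)=B^H(x)$.
   Context: Let $\zeta=e^{2\pi i/N}$; indices are modulo $N$. $H_N=\{(k,n,m):k,n,m\in\mathbb{Z}_N\}$ with multiplication $(k,n,m)\cdot(k',n',m')=(k+k',n+n',m+m'+kn')$, acting on $\mathbb{C}^N$ through the operators $(T_kx)_j=x_{j+k}$, $(M_nx)_j=\zeta^{nj}x_j$, $(Z_mx)_j=\zeta^m x_j$; the image of $H_N$ is the group generated by these operators. The discrete Fourier transform of $u\in\mathbb{C}^N$ is $\hat u[k]=\sum_{j=0}^{N-1}u_j\zeta^{-jk}$. For $x\in\mathbb{C}^N$ let $y=(|x_0|^2,\dots,|x_{N-1}|^2)\in\mathbb{R}^N$ and $z=(|\hat x[0]|^2,\dots,|\hat x[N-1]|^2)\in\mathbb{R}^N$. Define $B^M(x)(i,j)=\hat y[i]\hat y[j]\hat y[N-i-j]$ and $B^{FM}(x)(i,j)=\hat z[i]\hat z[j]\hat z[N-i-j]$ for $i,j\in\mathbb{Z}_N$, and the Heisenberg bispectrum $B^H(x)=(B^M(x),B^{FM}(x))$. *)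

theory Defs
  imports "HOL-Analysis.Analysis"
begin

text \<open>Vectors in C^N are modelled as functions nat => complex; only the
  entries at indices j < N are relevant. Indices are taken modulo N.\<close>

definition zeta :: "nat \<Rightarrow> complex" where
  "zeta N = cis (2 * pi / real N)"

definition transl :: "nat \<Rightarrow> nat \<Rightarrow> (nat \<Rightarrow> complex) \<Rightarrow> (nat \<Rightarrow> complex)" where
  "transl N k x = (\<lambda>j. x ((j + k) mod N))"

definition modul :: "nat \<Rightarrow> nat \<Rightarrow> (nat \<Rightarrow> complex) \<Rightarrow> (nat \<Rightarrow> complex)" where
  "modul N n x = (\<lambda>j. zeta N ^ (n * j) * x j)"

definition phase :: "nat \<Rightarrow> nat \<Rightarrow> (nat \<Rightarrow> complex) \<Rightarrow> (nat \<Rightarrow> complex)" where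
  "phase N m x = (\<lambda>j. zeta N ^ m * x j)"

text \<open>The image of H_N: the group of operators generated by T_k, M_n, Z_m
  (all of finite order, so the generated monoid is the generated group).\<close>
inductive_set heis_ops :: "nat \<Rightarrow> ((nat \<Rightarrow> complex) \<Rightarrow> (nat \<Rightarrow> complex)) set"
  for N :: nat where
  id_op: "id \<in> heis_ops N"
| T_op: "g \<in> heis_ops N \<Longrightarrow> transl N k \<circ> g \<in> heis_ops N"
| M_op: "g \<in> heis_ops N \<Longrightarrow> modul N n \<circ> g \<in> heis_ops N"
| Z_op: "g \<in> heis_ops N \<Longrightarrow> phase N m \<circ> g \<in> heis_ops N"

definition dft :: "nat \<Rightarrow> (nat \<Rightarrow> complex) \<Rightarrow> nat \<Rightarrow> complex" where
  "dft N u k = (\<Sum>j<N. u j * inverse (zeta N) ^ (j * k))"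

definition sqmod :: "(nat \<Rightarrow> complex) \<Rightarrow> nat \<Rightarrow> complex" where
  "sqmod x = (\<lambda>j. complex_of_real ((cmod (x j))\<^sup>2))"

definition bisp :: "nat \<Rightarrow> (nat \<Rightarrow> complex) \<Rightarrow> nat \<Rightarrow> nat \<Rightarrow> complex" where
  "bisp N y i j = dft N y i * dft N y j * dft N y ((2 * N - i - j) mod N)"

definition BM :: "nat \<Rightarrow> (nat \<Rightarrow> complex) \<Rightarrow> nat \<Rightarrow> nat \<Rightarrow> complex" where
  "BM N x = bisp N (sqmod x)"

definition BFM :: "nat \<Rightarrow> (nat \<Rightarrow> complex) \<Rightarrow> nat \<Rightarrow> nat \<Rightarrow> complex" where
  "BFM N x = bisp N (sqmod (dft N x))"

end

theory Submission
  imports Defs "HOL-Number_Theory.Cong"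
begin

lemma zeta_N: "N > 0 \<Longrightarrow> zeta N ^ N = 1"
proof -
  assume "N > 0"
  have "cis (2 * pi / real N) ^ N = cis (real N * (2 * pi / real N))" by (rule Complex.DeMoivre)
  then show ?thesis unfolding zeta_def using \<open>N > 0\<close> by simp
qed

lemma norm_zeta: "norm (zeta N) = 1"
  unfolding zeta_def by simp

lemma zeta_nz: "zeta N \<noteq> 0"
  using norm_zeta[of N] by auto

lemma winv_N: "N > 0 \<Longrightarrow> inverse (zeta N) ^ N = 1"
  by (simp add: power_inverse zeta_N)

lemma pow_mod: "(z::complex) ^ N = 1 \<Longrightarrow> z ^ a = z ^ (a mod N)"
proof -
  assume h: "z ^ N = 1"
  have "z ^ a = z ^ (N * (a div N) + a mod N)" by simp
  also have "\<dots> = (z ^ N) ^ (a div N) * z ^ (a mod N)" by (simp only: power_add power_mult)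
  finally show ?thesis using h by simp
qed

lemma sum_shift:
  assumes "N > 0"
  shows "(\<Sum>j<N. f ((j + k) mod N)) = (\<Sum>j<N. (f :: nat \<Rightarrow> complex) j)"
proof -
  let ?h = "\<lambda>j. (j + k) mod N"
  have inj: "inj_on ?h {..<N}"
  proof (rule inj_onI)
    fix a b assume "a \<in> {..<N}" "b \<in> {..<N}" "(a + k) mod N = (b + k) mod N"
    then have "[a + k = b + k] (mod N)" by (simp add: cong_def)
    then have "[a = b] (mod N)" using cong_add_rcancel_nat by blast
    then show "a = b" using cong_less_modulus_unique_nat \<open>a \<in> {..<N}\<close> \<open>b \<in> {..<N}\<close> by auto
  qed
  have sub: "?h ` {..<N} \<subseteq> {..<N}" using assms by auto
  have im: "?h ` {..<N} = {..<N}" using endo_inj_surj[OF _ sub inj] by simp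
  have "(\<Sum>j<N. f ((j + k) mod N)) = sum (f \<circ> ?h) {..<N}" by simp
  also have "\<dots> = sum f (?h ` {..<N})" using sum.reindex[OF inj, of f] by simp
  finally show ?thesis using im by simp
qed

lemma dft_shift:
  assumes "N > 0"
  shows "dft N (\<lambda>j. y ((j + k) mod N)) i = zeta N ^ (k * i) * dft N y i"
proof -
  let ?w = "inverse (zeta N)"
  have wN: "?w ^ N = 1" using winv_N[OF assms] .
  have "dft N (\<lambda>j. y ((j + k) mod N)) i * ?w ^ (k * i)
      = (\<Sum>j<N. y ((j + k) mod N) * ?w ^ ((j + k) * i))"
    unfolding dft_def sum_distrib_right by (intro sum.cong refl) (simp add: power_add algebra_simps)
  also have "\<dots> = (\<Sum>j<N. y ((j + k) mod N) * ?w ^ (((j + k) mod N) * i))"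
  proof (rule sum.cong[OF refl])
    fix j
    have "?w ^ ((j + k) * i) = ?w ^ (((j + k) * i) mod N)" using pow_mod[OF wN] .
    also have "\<dots> = ?w ^ ((((j + k) mod N) * i) mod N)" by (simp add: mod_mult_left_eq)
    also have "\<dots> = ?w ^ (((j + k) mod N) * i)" using pow_mod[OF wN] by metis
    finally show "y ((j + k) mod N) * ?w ^ ((j + k) * i) = y ((j + k) mod N) * ?w ^ (((j + k) mod N) * i)"
      by simp
  qed
  also have "\<dots> = (\<Sum>j<N. y j * ?w ^ (j * i))"
    using sum_shift[OF assms, of "\<lambda>l. y l * ?w ^ (l * i)"] by simp
  also have "\<dots> = dft N y i" unfolding dft_def by simp
  finally have e: "dft N (\<lambda>j. y ((j + k) mod N)) i * ?w ^ (k * i) = dft N y i" .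
  have "dft N (\<lambda>j. y ((j + k) mod N)) i = dft N (\<lambda>j. y ((j + k) mod N)) i * ?w ^ (k * i) * zeta N ^ (k * i)"
    using zeta_nz by (simp add: power_inverse)
  then show ?thesis using e by simp
qed

lemma bisp_shift:
  assumes "N > 0" "i < N" "j < N"
  shows "bisp N (\<lambda>l. y ((l + k) mod N)) i j = bisp N y i j"
proof -
  let ?r = "(2 * N - i - j) mod N"
  have zN: "zeta N ^ N = 1" using zeta_N[OF assms(1)] .
  have m: "(i + j + ?r) mod N = 0"
  proof -
    have "(i + j + ?r) mod N = (i + j + (2 * N - i - j)) mod N" by (simp add: mod_add_right_eq)
    also have "i + j + (2 * N - i - j) = 2 * N" using assms by simp
    finally show ?thesis by simp
  qed
  have "zeta N ^ (k * i) * zeta N ^ (k * j) * zeta N ^ (k * ?r) = zeta N ^ (k * (i + j + ?r))"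
    by (simp add: power_add algebra_simps)
  also have "\<dots> = zeta N ^ ((k * (i + j + ?r)) mod N)" using pow_mod[OF zN] .
  also have "(k * (i + j + ?r)) mod N = 0" using m by (metis mod_mult_right_eq mult_0_right mod_0)
  finally have p: "zeta N ^ (k * i) * zeta N ^ (k * j) * zeta N ^ (k * ?r) = 1" by simp
  show ?thesis unfolding bisp_def dft_shift[OF assms(1)]
    using p by (simp add: algebra_simps)
qed

lemma dft_congr: "(\<And>j. j < N \<Longrightarrow> u j = v j) \<Longrightarrow> dft N u = dft N v"
  unfolding dft_def by (intro ext sum.cong) auto

lemma dft_modul:
  assumes "N > 0"
  shows "dft N (modul N n x) i = dft N x ((i + (N - n mod N)) mod N)"
proof -
  let ?w = "inverse (zeta N)"
  let ?k = "N - n mod N"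
  have zN: "zeta N ^ N = 1" using zeta_N[OF assms] .
  have wN: "?w ^ N = 1" using winv_N[OF assms] .
  have nk: "(n + ?k) mod N = 0"
  proof -
    have "(n + ?k) mod N = (n mod N + ?k) mod N" by (simp add: mod_add_left_eq)
    also have "n mod N + ?k = N" using assms by simp
    finally show ?thesis by simp
  qed
  have key: "zeta N ^ (n * j) = ?w ^ (?k * j)" for j
  proof -
    have "zeta N ^ (n * j) * zeta N ^ (?k * j) = zeta N ^ ((n + ?k) * j)" by (simp add: power_add algebra_simps)
    also have "\<dots> = zeta N ^ (((n + ?k) * j) mod N)" using pow_mod[OF zN] .
    also have "((n + ?k) * j) mod N = 0" using nk by (metis mod_mult_left_eq mult_0 mod_0)
    finally have "zeta N ^ (n * j) * zeta N ^ (?k * j) = 1" by simp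
    then show ?thesis using zeta_nz by (simp add: power_inverse field_simps)
  qed
  have "dft N (modul N n x) i = (\<Sum>j<N. x j * ?w ^ (j * (i + ?k)))"
    unfolding dft_def modul_def
  proof (intro sum.cong refl)
    fix j
    have e: "?k * j + j * i = j * (i + ?k)" by (metis add.commute distrib_left mult.commute)
    have "zeta N ^ (n * j) * ?w ^ (j * i) = ?w ^ (j * (i + ?k))"
      unfolding key power_add[symmetric] e ..
    then show "zeta N ^ (n * j) * x j * ?w ^ (j * i) = x j * ?w ^ (j * (i + ?k))"
      by (simp add: mult.commute mult.left_commute)
  qed
  also have "\<dots> = (\<Sum>j<N. x j * ?w ^ (j * ((i + ?k) mod N)))"
  proof (intro sum.cong refl)
    fix j
    have "?w ^ (j * (i + ?k)) = ?w ^ ((j * (i + ?k)) mod N)" using pow_mod[OF wN] .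
    also have "\<dots> = ?w ^ ((j * ((i + ?k) mod N)) mod N)" by (simp add: mod_mult_right_eq)
    also have "\<dots> = ?w ^ (j * ((i + ?k) mod N))" using pow_mod[OF wN] by metis
    finally show "x j * ?w ^ (j * (i + ?k)) = x j * ?w ^ (j * ((i + ?k) mod N))" by simp
  qed
  finally show ?thesis unfolding dft_def .
qed

lemma norm_zeta_pow: "norm (zeta N ^ a) = 1"
  by (simp add: norm_power norm_zeta)

lemma ops_inv:
  assumes "N > 0" "i < N" "j < N"
  shows "BM N (transl N k x) i j = BM N x i j \<and> BFM N (transl N k x) i j = BFM N x i j"
    and "BM N (modul N n x) i j = BM N x i j \<and> BFM N (modul N n x) i j = BFM N x i j"
    and "BM N (phase N m x) i j = BM N x i j \<and> BFM N (phase N m x) i j = BFM N x i j"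
proof -
  have a1: "sqmod (transl N k x) = (\<lambda>l. sqmod x ((l + k) mod N))"
    unfolding sqmod_def transl_def by simp
  have b1: "sqmod (dft N (transl N k x)) = sqmod (dft N x)"
    unfolding sqmod_def transl_def dft_shift[OF assms(1)]
    by (simp add: norm_mult norm_zeta_pow)
  show "BM N (transl N k x) i j = BM N x i j \<and> BFM N (transl N k x) i j = BFM N x i j"
    unfolding BM_def BFM_def a1 b1 using bisp_shift[OF assms] by simp
  have a2: "sqmod (modul N n x) = sqmod x"
    unfolding sqmod_def modul_def by (simp add: norm_mult norm_zeta_pow)
  have b2: "sqmod (dft N (modul N n x)) = (\<lambda>l. sqmod (dft N x) ((l + (N - n mod N)) mod N))"
    unfolding sqmod_def dft_modul[OF assms(1)] by simp
  show "BM N (modul N n x) i j = BM N x i j \<and> BFM N (modul N n x) i j = BFM N x i j"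
    unfolding BM_def BFM_def a2 b2 using bisp_shift[OF assms] by simp
  have a3: "sqmod (phase N m x) = sqmod x"
    unfolding sqmod_def phase_def by (simp add: norm_mult norm_zeta_pow)
  have d3: "dft N (phase N m x) l = zeta N ^ m * dft N x l" for l
    unfolding dft_def phase_def by (simp add: sum_distrib_left algebra_simps)
  have b3: "sqmod (dft N (phase N m x)) = sqmod (dft N x)"
    unfolding sqmod_def d3 by (simp add: norm_mult norm_zeta_pow)
  show "BM N (phase N m x) i j = BM N x i j \<and> BFM N (phase N m x) i j = BFM N x i j"
    unfolding BM_def BFM_def a3 b3 by simp
qed

theorem theorem4p3:
  fixes N :: nat and g :: "(nat \<Rightarrow> complex) \<Rightarrow> (nat \<Rightarrow> complex)" and x :: "nat \<Rightarrow> complex"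
  assumes "N \<ge> 2" and "g \<in> heis_ops N"
  shows "\<forall>i<N. \<forall>j<N. BM N (g x) i j = BM N x i j \<and> BFM N (g x) i j = BFM N x i j"
proof -
  have N0: "N > 0" using assms(1) by simp
  have "\<forall>x. \<forall>i<N. \<forall>j<N. BM N (g x) i j = BM N x i j \<and> BFM N (g x) i j = BFM N x i j"
    using assms(2)
  proof (induction g rule: heis_ops.induct)
    case id_op then show ?case by simp
  next
    case (T_op g k) then show ?case using ops_inv(1)[OF N0] by simp
  next
    case (M_op g n) then show ?case using ops_inv(2)[OF N0] by simp
  next
    case (Z_op g m) then show ?case using ops_inv(3)[OF N0] by simp
  qed
  then show ?thesis by blast
qed

end
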